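(* Let $A=K[X_1,\ldots,X_n]$ over a field $K$, let $d$ be a positive integer, let $W$ be a $K$-vector subspace of $A_d$, and let $\omega=(\omega_1,\ldots,\omega_n)\in\mathbb Z^n$ be a weight with $\omega_1\geq\cdots\geq\omega_n\geq 0$. Then for every integer $0\leq a\leq\omega_1 d$, the dimension of the homogeneous component of weight $a$ of $\operatorname{in}_\omega(W)$ equals $\operatorname{rk}^{S_a}W-\operatorname{rk}^{S_{a+1}}W$. Furthermore, if $W$ is homogeneous with respect to $\omega$ and $b\in\mathcal B$, then $\alpha_\omega(bW)\geq\alpha_\omega(W)$ (componentwise).
   Context: $A_d$ is the space of homogeneous polynomials of degree $d$. The weight of a monomial $\mathbf X^{\mathbf a}$ is $\omega\cdot\mathbf a$. For $0\leq a\leq\omega_1d+1$, $S_a$ is the set of monomials in $A_d$ of weight strictly less than $a$. For a finite set $S$ of monomials and a subspace $W$, $\operatorname{rk}^S W=\dim_K (W+\langle S\rangle)/\langle S\rangle$, where $\langle S\rangle$ is the $K$-span of $S$. Define $\alpha_\omega(W)=(\operatorname{rk}^{S_{\omega_1 d}}W,\operatorname{rk}^{S_{\omega_1 d-1}}W,\ldots,\operatorname{rk}^{S_1}W)$. The initial form $\operatorname{in}_\omega(f)$ is the sum of the terms of $f$ of maximal weight, and $\operatorname{in}_\omega(W)$ is the $K$-span of $\{\operatorname{in}_\omega(f): f\in W\}$; its homogeneous component of weight $a$ is its intersection with the span of monomials of weight $a$. $W$ is homogeneous with respect to $\omega$ if it is spanned by polynomials all of whose monomials have the same weight. $\mathcal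 B$ is the group of invertible upper-triangular $n\times n$ matrices over $K$; a matrix $b=(b_{ij})$ acts on $A$ as the linear change of coordinates $X_j\mapsto\sum_{i=1}^n b_{ij}X_i$ (so for $b\in\mathcal B$, $X_j\mapsto \sum_{i\le j}b_{ij}X_i$), and $bW$ is the image of $W$. *)

theory Defs
  imports Complex_Main "HOL-Library.Poly_Mapping"
begin

text \<open>Polynomials in K[X_0,...,X_{n-1}] (variables indexed from 0): finitely supported
  maps from exponent vectors (nat =>0 nat) to coefficients.\<close>
type_synonym 'k mpoly = "(nat \<Rightarrow>\<^sub>0 nat) \<Rightarrow>\<^sub>0 'k"

definition sc :: "'k::field \<Rightarrow> 'k mpoly \<Rightarrow> 'k mpoly" where
  "sc c p = Poly_Mapping.map (\<lambda>x. c * x) p"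

abbreviation kspan :: "'k::field mpoly set \<Rightarrow> 'k mpoly set" where
  "kspan \<equiv> Modules.module.span sc"

abbreviation kdim :: "'k::field mpoly set \<Rightarrow> nat" where
  "kdim \<equiv> Vector_Spaces.vector_space.dim sc"

abbreviation ksubspace :: "'k::field mpoly set \<Rightarrow> bool" where
  "ksubspace \<equiv> Modules.module.subspace sc"

definition in_vars :: "nat \<Rightarrow> (nat \<Rightarrow>\<^sub>0 nat) \<Rightarrow> bool" where
  "in_vars n m \<longleftrightarrow> Poly_Mapping.keys m \<subseteq> {..<n}"

definition is_mon :: "nat \<Rightarrow> nat \<Rightarrow> (nat \<Rightarrow>\<^sub>0 nat) \<Rightarrow> bool" where
  "is_mon n d m \<longleftrightarrow> in_vars n m \<and> (\<Sum>i<n. Poly_Mapping.lookup m i) = d"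

definition Ad :: "nat \<Rightarrow> nat \<Rightarrow> 'k::field mpoly set" where
  "Ad n d = {p. \<forall>m\<in>Poly_Mapping.keys p. is_mon n d m}"

definition monom :: "(nat \<Rightarrow>\<^sub>0 nat) \<Rightarrow> 'k::field mpoly" where
  "monom m = Poly_Mapping.single m 1"

definition Var :: "nat \<Rightarrow> 'k::field mpoly" where
  "Var i = monom (Poly_Mapping.single i 1)"

definition weight :: "nat \<Rightarrow> (nat \<Rightarrow> int) \<Rightarrow> (nat \<Rightarrow>\<^sub>0 nat) \<Rightarrow> int" where
  "weight n \<omega> m = (\<Sum>i<n. \<omega> i * int (Poly_Mapping.lookup m i))"

definition Sset :: "nat \<Rightarrow> nat \<Rightarrow> (nat \<Rightarrow> int) \<Rightarrow> int \<Rightarrow> 'k::field mpoly set" where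
  "Sset n d \<omega> a = {monom m | m. is_mon n d m \<and> weight n \<omega> m < a}"

text \<open>rk^S W = dim (W + <S>)/<S> = dim (W + <S>) - dim <S>.\<close>
definition rk :: "'k::field mpoly set \<Rightarrow> 'k mpoly set \<Rightarrow> nat" where
  "rk S W = kdim {w + s | w s. w \<in> W \<and> s \<in> kspan S} - kdim (kspan S)"

text \<open>alpha_omega(W) = (rk^{S_{w1 d}} W, rk^{S_{w1 d - 1}} W, ..., rk^{S_1} W), w1 = omega 0.\<close>
definition alpha :: "nat \<Rightarrow> nat \<Rightarrow> (nat \<Rightarrow> int) \<Rightarrow> 'k::field mpoly set \<Rightarrow> nat list" where
  "alpha n d \<omega> W = map (\<lambda>k. rk (Sset n d \<omega> (\<omega> 0 * int d - int k)) W) [0..<nat (\<omega> 0 * int d)]"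

definition init_form :: "nat \<Rightarrow> (nat \<Rightarrow> int) \<Rightarrow> 'k::field mpoly \<Rightarrow> 'k mpoly" where
  "init_form n \<omega> f =
     (if f = 0 then 0 else
       (let M = Max (weight n \<omega> ` Poly_Mapping.keys f)
        in (\<Sum>m\<in>Poly_Mapping.keys f. if weight n \<omega> m = M then Poly_Mapping.single m (Poly_Mapping.lookup f m) else 0)))"

definition init_space :: "nat \<Rightarrow> (nat \<Rightarrow> int) \<Rightarrow> 'k::field mpoly set \<Rightarrow> 'k mpoly set" where
  "init_space n \<omega> W = kspan (init_form n \<omega> ` W)"

definition weight_component :: "nat \<Rightarrow> (nat \<Rightarrow> int) \<Rightarrow> int \<Rightarrow> 'k::field mpoly set \<Rightarrow> 'k mpoly set" where
  "weight_component n \<omega> a V = V \<inter> kspan {monom m | m. in_vars n m \<and> weight n \<omega> m = a}"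

definition omega_homogeneous :: "nat \<Rightarrow> (nat \<Rightarrow> int) \<Rightarrow> 'k::field mpoly set \<Rightarrow> bool" where
  "omega_homogeneous n \<omega> W \<longleftrightarrow>
     (\<exists>G. kspan G = W \<and> (\<forall>g\<in>G. \<forall>m1\<in>Poly_Mapping.keys g. \<forall>m2\<in>Poly_Mapping.keys g. weight n \<omega> m1 = weight n \<omega> m2))"

definition upper_tri_invertible :: "nat \<Rightarrow> (nat \<Rightarrow> nat \<Rightarrow> 'k::field) \<Rightarrow> bool" where
  "upper_tri_invertible n b \<longleftrightarrow>
     (\<forall>i<n. \<forall>j<n. j < i \<longrightarrow> b i j = 0) \<and>
     (\<exists>c. \<forall>i<n. \<forall>j<n.
        (\<Sum>k<n. b i k * c k j) = (if i = j then 1 else 0) \<and>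
        (\<Sum>k<n. c i k * b k j) = (if i = j then 1 else 0))"

definition act :: "nat \<Rightarrow> (nat \<Rightarrow> nat \<Rightarrow> 'k::field) \<Rightarrow> 'k mpoly \<Rightarrow> 'k mpoly" where
  "act n b f = (\<Sum>m\<in>Poly_Mapping.keys f. sc (Poly_Mapping.lookup f m)
       (\<Prod>j<n. (\<Sum>i<n. sc (b i j) (Var i)) ^ Poly_Mapping.lookup m j))"

end

theory Submission
  imports Defs
begin


lemma sc_conv: "sc c p = Poly_Mapping.single 0 c * p"
  unfolding sc_def by (rule mult_map_scale_conv_mult)

interpretation kvs: vector_space "sc :: 'k::field \<Rightarrow> 'k mpoly \<Rightarrow> 'k mpoly"
  by unfold_locales (simp_all add: sc_conv algebra_simps single_add mult_single flip: mult.assoc)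

lemma lookup_sc[simp]: "Poly_Mapping.lookup (sc c p) k = c * Poly_Mapping.lookup p k"
  unfolding sc_def by transfer (simp add: when_def)

lemma keys_sc: "Poly_Mapping.keys (sc c p) \<subseteq> Poly_Mapping.keys p"
  by (auto simp: in_keys_iff)

lemma test: "kspan {x} = range (\<lambda>k. sc k x)"
  by (rule kvs.span_singleton)



lemma fin_basis:
  assumes "finite T" "U \<subseteq> kspan T"
  obtains B where "B \<subseteq> U" "kvs.independent B" "U \<subseteq> kspan B" "card B = kdim U" "finite B"
proof -
  obtain B where B: "B \<subseteq> U" "kvs.independent B" "U \<subseteq> kspan B" "card B = kdim U"
    by (rule kvs.basis_exists)
  have "finite B" using kvs.independent_span_bound[OF assms(1) B(2)] B(1) assms(2) by blast
  thus ?thesis using B that by blast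
qed

lemma dim_mono_fin:
  assumes "finite T" "U \<subseteq> kspan T" "V \<subseteq> U"
  shows "kdim V \<le> kdim U"
proof -
  obtain B where B: "B \<subseteq> U" "kvs.independent B" "U \<subseteq> kspan B" "card B = kdim U" "finite B"
    using fin_basis[OF assms(1,2)] by blast
  show ?thesis using kvs.dim_le_card[of V B] B assms(3) by auto
qed

lemma rank_nullity:
  fixes f :: "'k::field mpoly \<Rightarrow> 'k mpoly"
  assumes lf: "module_hom sc sc f" and U: "ksubspace U" and T: "finite T" "U \<subseteq> kspan T"
  shows "kdim U = kdim (f ` U) + kdim (U \<inter> {x. f x = 0})"
proof -
  interpret fh: module_hom sc sc f by fact
  define K where "K = U \<inter> {x. f x = 0}"
  have K: "ksubspace K" unfolding K_def
    by (intro kvs.subspace_inter U fh.subspace_kernel)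
  obtain B0 where B0: "B0 \<subseteq> K" "kvs.independent B0" "K \<subseteq> kspan B0"
    by (rule kvs.maximal_independent_subset)
  have "B0 \<subseteq> U" using B0 K_def by auto
  then obtain B where B: "B0 \<subseteq> B" "B \<subseteq> U" "kvs.independent B" "U \<subseteq> kspan B"
    using kvs.maximal_independent_subset_extend[OF _ B0(2)] by metis
  have finB: "finite B" using kvs.independent_span_bound[OF T(1) B(3)] B(2) T(2) by blast
  have cB: "card B = kdim U" using kvs.basis_card_eq_dim B by blast
  have cB0: "card B0 = kdim K" using kvs.basis_card_eq_dim B0 by blast
  have finB0: "finite B0" using finB B(1) finite_subset by blast
  define C where "C = B - B0"
  have spB: "kspan B = U" using B kvs.span_minimal[OF B(2) U] by blast
  have "f ` U = kspan (f ` B)" using spB fh.span_image by simp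
  also have "\<dots> \<subseteq> kspan (f ` C)"
  proof (rule kvs.span_minimal[OF _ kvs.subspace_span])
    show "f ` B \<subseteq> kspan (f ` C)"
    proof
      fix y assume "y \<in> f ` B"
      then obtain x where x: "x \<in> B" "y = f x" by blast
      show "y \<in> kspan (f ` C)"
      proof (cases "x \<in> B0")
        case True
        then have "y = 0" using B0 K_def x by auto
        then show ?thesis by (simp add: kvs.span_zero)
      next
        case False
        then show ?thesis using x C_def by (auto intro: kvs.span_base)
      qed
    qed
  qed
  finally have fU: "f ` U \<subseteq> kspan (f ` C)" .
  have "kdim (f ` U) \<le> card (f ` C)"
    using kvs.dim_le_card[OF fU] finB C_def by auto
  also have "\<dots> \<le> card C" using finB C_def card_image_le by auto
  also have "\<dots> = card B - card B0" using C_def card_Diff_subset finB0 B(1) by auto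
  finally have le1: "kdim (f ` U) + kdim K \<le> kdim U" using cB cB0 card_mono[OF finB B(1)] by linarith
  have fUs: "ksubspace (f ` U)" by (rule fh.subspace_image[OF U])
  have "f ` U \<subseteq> kspan (f ` T)" using T(2) fh.span_image by blast
  then obtain D where D: "D \<subseteq> f ` U" "kvs.independent D" "f ` U \<subseteq> kspan D" "card D = kdim (f ` U)" "finite D"
    using fin_basis[of "f ` T" "f ` U"] T(1) by blast
  define E where "E = inv_into U f ` D"
  have EU: "E \<subseteq> U" using D(1) E_def by (auto intro: inv_into_into)
  have fE: "f ` E = D" unfolding E_def by (rule image_inv_into_cancel[OF refl D(1)])
  have cE: "card E \<le> card D" using E_def card_image_le D(5) by auto
  have finE: "finite E" using E_def D(5) by auto
  have "U \<subseteq> kspan (E \<union> B0)"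
  proof
    fix u assume u: "u \<in> U"
    then have "f u \<in> kspan (f ` E)" using D(3) fE by auto
    then obtain v where v: "v \<in> kspan E" "f v = f u" using fh.span_image by auto
    have vU: "v \<in> U" using v(1) kvs.span_minimal[OF EU U] by auto
    have "u - v \<in> K" using u vU v(2) K_def kvs.subspace_diff[OF U] fh.diff by auto
    then have "u - v \<in> kspan (E \<union> B0)" using B0(3) kvs.span_mono[of B0 "E \<union> B0"] by auto
    moreover have "v \<in> kspan (E \<union> B0)" using v(1) kvs.span_mono[of E "E \<union> B0"] by auto
    ultimately have "(u - v) + v \<in> kspan (E \<union> B0)" by (rule kvs.span_add)
    then show "u \<in> kspan (E \<union> B0)" by simp
  qed
  then have "kdim U \<le> card (E \<union> B0)" using kvs.dim_le_card finE finB0 by blast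
  also have "\<dots> \<le> card E + card B0" by (rule card_Un_le)
  finally have le2: "kdim U \<le> kdim (f ` U) + kdim K" using cE D(4) cB0 by linarith
  show ?thesis using le1 le2 unfolding K_def by linarith
qed



lemma module_sc: "module (sc :: 'k::field \<Rightarrow> 'k mpoly \<Rightarrow> 'k mpoly)"
  using kvs.vector_space_axioms module_iff_vector_space by blast

lemma module_homI:
  fixes f :: "'k::field mpoly \<Rightarrow> 'k mpoly"
  assumes "\<And>x y. f (x + y) = f x + f y" "\<And>c x. f (sc c x) = sc c (f x)"
  shows "module_hom sc sc f"
  using assms module_sc by (simp add: module_hom_iff)

definition restr :: "((nat \<Rightarrow>\<^sub>0 nat) \<Rightarrow> bool) \<Rightarrow> 'k::field mpoly \<Rightarrow> 'k mpoly" where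
  "restr P f = Abs_poly_mapping (\<lambda>m. if P m then Poly_Mapping.lookup f m else 0)"

lemma lookup_restr[simp]:
  "Poly_Mapping.lookup (restr P f) m = (if P m then Poly_Mapping.lookup f m else 0)"
proof -
  have "{m. (if P m then Poly_Mapping.lookup f m else 0) \<noteq> 0} \<subseteq> Poly_Mapping.keys f"
    by (simp add: subset_iff in_keys_iff)
  then have "finite {m. (if P m then Poly_Mapping.lookup f m else 0) \<noteq> 0}"
    by (rule finite_subset) simp
  then show ?thesis by (simp only: restr_def lookup_Abs_poly_mapping)
qed

lemma keys_restr: "Poly_Mapping.keys (restr P f) = {k \<in> Poly_Mapping.keys f. P k}"
  by (simp add: set_eq_iff in_keys_iff)

lemma restr_hom: "module_hom sc sc (restr P :: 'k::field mpoly \<Rightarrow> _)"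
  by (rule module_homI; rule poly_mapping_eqI; simp add: lookup_add)

lemma restr_restr: "restr P (restr Q f) = restr (\<lambda>m. P m \<and> Q m) f"
  by (rule poly_mapping_eqI) simp

lemma restr_id: "(\<And>k. k \<in> Poly_Mapping.keys f \<Longrightarrow> P k) \<Longrightarrow> restr P f = f"
  by (rule poly_mapping_eqI) (auto simp: in_keys_iff)

lemma restr_zero: "(\<And>k. k \<in> Poly_Mapping.keys f \<Longrightarrow> \<not> P k) \<Longrightarrow> restr P f = 0"
  by (rule poly_mapping_eqI) (auto simp: in_keys_iff)

lemma lookup_monom: "Poly_Mapping.lookup (monom m :: 'k::field mpoly) k = (if k = m then 1 else 0)"
  unfolding monom_def by (simp add: lookup_single)

lemma keys_monom[simp]: "Poly_Mapping.keys (monom m :: 'k::field mpoly) = {m}"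
  unfolding monom_def by simp

lemma sum_singles:
  "f = (\<Sum>m\<in>Poly_Mapping.keys f. sc (Poly_Mapping.lookup f m) (monom m :: 'k::field mpoly))"
proof (rule poly_mapping_eqI)
  fix k
  have "(\<Sum>m\<in>Poly_Mapping.keys f. Poly_Mapping.lookup f m * (if k = m then 1 else 0))
       = (\<Sum>m\<in>Poly_Mapping.keys f. if m = k then Poly_Mapping.lookup f k else 0)"
    by (rule sum.cong) auto
  also have "\<dots> = Poly_Mapping.lookup f k" by (simp add: in_keys_iff)
  finally show "Poly_Mapping.lookup f k =
      Poly_Mapping.lookup (\<Sum>m\<in>Poly_Mapping.keys f. sc (Poly_Mapping.lookup f m) (monom m)) k"
    by (simp add: lookup_sum lookup_monom)
qed

lemma span_monoms:
  "kspan {monom m :: 'k::field mpoly | m. R m} = {f. \<forall>k\<in>Poly_Mapping.keys f. R k}"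
proof
  have "ksubspace {f :: 'k mpoly. \<forall>k\<in>Poly_Mapping.keys f. R k}"
  proof (unfold kvs.subspace_def, intro conjI allI impI ballI)
    fix x y :: "'k mpoly" and k
    assume x: "x \<in> {f. \<forall>k\<in>Poly_Mapping.keys f. R k}" and y: "y \<in> {f. \<forall>k\<in>Poly_Mapping.keys f. R k}"
    show "x + y \<in> {f. \<forall>k\<in>Poly_Mapping.keys f. R k}"
      using x y keys_add[of x y] by blast
  next
    fix c x assume x: "x \<in> {f :: 'k mpoly. \<forall>k\<in>Poly_Mapping.keys f. R k}"
    show "sc c x \<in> {f. \<forall>k\<in>Poly_Mapping.keys f. R k}" using x keys_sc[of c x] by blast
  qed simp
  then show "kspan {monom m :: 'k::field mpoly | m. R m} \<subseteq> {f. \<forall>k\<in>Poly_Mapping.keys f. R k}"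
    by (intro kvs.span_minimal) auto
next
  show "{f. \<forall>k\<in>Poly_Mapping.keys f. R k} \<subseteq> kspan {monom m :: 'k::field mpoly | m. R m}"
  proof
    fix f :: "'k mpoly" assume "f \<in> {f. \<forall>k\<in>Poly_Mapping.keys f. R k}"
    then have "\<forall>k\<in>Poly_Mapping.keys f. R k" by simp
    then have "(\<Sum>m\<in>Poly_Mapping.keys f. sc (Poly_Mapping.lookup f m) (monom m :: 'k::field mpoly))
         \<in> kspan {monom m :: 'k::field mpoly | m. R m}"
      by (intro kvs.span_sum kvs.span_scale kvs.span_base) auto
    then show "f \<in> kspan {monom m :: 'k::field mpoly | m. R m}" using sum_singles[of f] by simp
  qed
qed

lemma finite_is_mon: "finite {m. is_mon n d m}"
proof -
  let ?S = "{g. \<forall>x. (x \<in> {..<n} \<longrightarrow> g x \<in> {0..d}) \<and> (x \<notin> {..<n} \<longrightarrow> g x = (0::nat))}"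
  have "Poly_Mapping.lookup ` {m. is_mon n d m} \<subseteq> ?S"
  proof
    fix g assume "g \<in> Poly_Mapping.lookup ` {m. is_mon n d m}"
    then obtain m where m: "is_mon n d m" and g: "g = Poly_Mapping.lookup m" by auto
    have ks: "Poly_Mapping.keys m \<subseteq> {..<n}" and sm: "(\<Sum>i<n. Poly_Mapping.lookup m i) = d"
      using m unfolding is_mon_def in_vars_def by auto
    have "\<forall>x. (x \<in> {..<n} \<longrightarrow> g x \<in> {0..d}) \<and> (x \<notin> {..<n} \<longrightarrow> g x = 0)"
    proof (intro allI conjI impI)
      fix x assume x: "x \<in> {..<n}"
      have "Poly_Mapping.lookup m x \<le> (\<Sum>i<n. Poly_Mapping.lookup m i)"
        by (rule member_le_sum[OF x]) simp_all
      then show "g x \<in> {0..d}" using sm g by simp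
    next
      fix x assume x: "x \<notin> {..<n}"
      then have "x \<notin> Poly_Mapping.keys m" using ks by blast
      then show "g x = 0" using g by (simp add: in_keys_iff)
    qed
    then show "g \<in> ?S" by simp
  qed
  moreover have "finite ?S"
    by (rule finite_set_of_finite_funs) simp_all
  ultimately have "finite (Poly_Mapping.lookup ` {m. is_mon n d m})" by (rule finite_subset)
  moreover have "inj_on Poly_Mapping.lookup {m. is_mon n d m}"
    by (rule inj_onI, rule poly_mapping_eqI) simp
  ultimately show ?thesis by (rule finite_imageD)
qed

definition MB :: "nat \<Rightarrow> nat \<Rightarrow> 'k::field mpoly set" where
  "MB n d = {monom m | m. is_mon n d m}"

lemma finite_MB: "finite (MB n d)"
proof -
  have "MB n d = monom ` {m. is_mon n d m}" unfolding MB_def by auto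
  then show ?thesis using finite_imageI[OF finite_is_mon, of monom n d] by metis
qed

lemma Ad_span: "Ad n d = kspan (MB n d)"
  unfolding MB_def span_monoms Ad_def by simp

lemma Ad_subspace: "ksubspace (Ad n d)"
  unfolding Ad_span by simp



definition Pw :: "nat \<Rightarrow> (nat \<Rightarrow> int) \<Rightarrow> int \<Rightarrow> 'k::field mpoly \<Rightarrow> 'k mpoly" where
  "Pw n \<omega> a = restr (\<lambda>m. a \<le> weight n \<omega> m)"

lemma lookup_Pw[simp]: "Poly_Mapping.lookup (Pw n \<omega> a f) m = (if a \<le> weight n \<omega> m then Poly_Mapping.lookup f m else 0)"
  unfolding Pw_def by simp

lemma Pw_hom: "module_hom sc sc (Pw n \<omega> a :: 'k::field mpoly \<Rightarrow> _)"
  unfolding Pw_def by (rule restr_hom)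

lemma keys_Pw: "Poly_Mapping.keys (Pw n \<omega> a f) = {k \<in> Poly_Mapping.keys f. a \<le> weight n \<omega> k}"
  unfolding Pw_def by (rule keys_restr)

lemma Pw_eq_0_iff: "Pw n \<omega> a f = 0 \<longleftrightarrow> (\<forall>k\<in>Poly_Mapping.keys f. weight n \<omega> k < a)"
proof -
  have "Pw n \<omega> a f = 0 \<longleftrightarrow> Poly_Mapping.keys (Pw n \<omega> a f) = {}" by simp
  also have "\<dots> \<longleftrightarrow> (\<forall>k\<in>Poly_Mapping.keys f. weight n \<omega> k < a)" unfolding keys_Pw by auto
  finally show ?thesis .
qed

lemma Pw_Pw: "b \<ge> a \<Longrightarrow> Pw n \<omega> b (Pw n \<omega> a f) = Pw n \<omega> b f"
  by (rule poly_mapping_eqI) simp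

lemma Pw_Ad: "f \<in> Ad n d \<Longrightarrow> Pw n \<omega> a f \<in> Ad n d"
  unfolding Ad_def by (auto simp: keys_Pw)

lemma rk_char:
  fixes W :: "'k::field mpoly set"
  assumes W: "ksubspace W" "W \<subseteq> Ad n d"
  shows "rk (Sset n d \<omega> a) W = kdim (Pw n \<omega> a ` W)"
proof -
  interpret ph: module_hom sc sc "Pw n \<omega> a :: 'k mpoly \<Rightarrow> _" by (rule Pw_hom)
  define L :: "'k mpoly set" where "L = kspan (Sset n d \<omega> a)"
  have L: "L = {f. \<forall>k\<in>Poly_Mapping.keys f. is_mon n d k \<and> weight n \<omega> k < a}"
    unfolding L_def Sset_def span_monoms by simp
  define X where "X = {w + s | w s. w \<in> W \<and> s \<in> L}"
  have Xs: "ksubspace X" unfolding X_def L_def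
    by (rule kvs.subspace_sums[OF W(1)]) simp
  have LAd: "L \<subseteq> Ad n d" unfolding L Ad_def by auto
  have XAd: "X \<subseteq> Ad n d" unfolding X_def using W(2) LAd
    by (auto intro: kvs.subspace_add[OF Ad_subspace])
  have PL: "Pw n \<omega> a s = 0" if "s \<in> L" for s
    using that unfolding L Pw_eq_0_iff by auto
  have PX: "Pw n \<omega> a ` X = Pw n \<omega> a ` W"
  proof
    show "Pw n \<omega> a ` X \<subseteq> Pw n \<omega> a ` W"
      unfolding X_def using PL by (auto simp: ph.add)
  next
    have "0 \<in> L" unfolding L_def by (rule kvs.span_zero)
    then have "W \<subseteq> X" unfolding X_def by force
    then show "Pw n \<omega> a ` W \<subseteq> Pw n \<omega> a ` X" by blast
  qed
  have KX: "X \<inter> {x. Pw n \<omega> a x = 0} = L"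
  proof
    show "X \<inter> {x. Pw n \<omega> a x = 0} \<subseteq> L"
    proof
      fix x assume x: "x \<in> X \<inter> {x. Pw n \<omega> a x = 0}"
      then obtain w s where ws: "x = w + s" "w \<in> W" "s \<in> L" unfolding X_def by blast
      have "Pw n \<omega> a w = 0" using x ws PL[OF ws(3)] by (simp add: ph.add)
      then have "w \<in> L" using ws(2) W(2) unfolding L Pw_eq_0_iff Ad_def by auto
      then show "x \<in> L" using ws unfolding L_def by (simp add: kvs.span_add)
    qed
  next
    have "0 \<in> W" using W(1) kvs.subspace_0 by blast
    then show "L \<subseteq> X \<inter> {x. Pw n \<omega> a x = 0}" unfolding X_def using PL by force
  qed
  have "kdim X = kdim (Pw n \<omega> a ` X) + kdim (X \<inter> {x. Pw n \<omega> a x = 0})"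
    by (rule rank_nullity[OF Pw_hom Xs finite_MB]) (use XAd Ad_span in auto)
  then have "kdim X = kdim (Pw n \<omega> a ` W) + kdim L" using PX KX by simp
  then show ?thesis unfolding rk_def using X_def L_def by simp
qed



lemma init_form_eq:
  assumes "f \<noteq> 0"
  shows "init_form n \<omega> f = restr (\<lambda>m. weight n \<omega> m = Max (weight n \<omega> ` Poly_Mapping.keys f)) f"
proof (rule poly_mapping_eqI)
  fix k
  define M where "M = Max (weight n \<omega> ` Poly_Mapping.keys f)"
  have "Poly_Mapping.lookup (init_form n \<omega> f) k =
     (\<Sum>m\<in>Poly_Mapping.keys f. Poly_Mapping.lookup (if weight n \<omega> m = M then Poly_Mapping.single m (Poly_Mapping.lookup f m) else 0) k)"
    unfolding init_form_def Let_def M_def using assms by (simp add: lookup_sum)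
  also have "\<dots> = (\<Sum>m\<in>Poly_Mapping.keys f. if m = k then (if weight n \<omega> k = M then Poly_Mapping.lookup f k else 0) else 0)"
    by (rule sum.cong) (auto simp: lookup_single)
  also have "\<dots> = (if weight n \<omega> k = M then Poly_Mapping.lookup f k else 0)"
    by (simp add: in_keys_iff)
  finally show "Poly_Mapping.lookup (init_form n \<omega> f) k = Poly_Mapping.lookup (restr (\<lambda>m. weight n \<omega> m = M) f) k"
    by simp
qed

lemma Max_props:
  assumes "(f::'k::field mpoly) \<noteq> 0"
  shows "\<forall>k\<in>Poly_Mapping.keys f. weight n \<omega> k \<le> Max (weight n \<omega> ` Poly_Mapping.keys f)"
    and "\<exists>k\<in>Poly_Mapping.keys f. weight n \<omega> k = Max (weight n \<omega> ` Poly_Mapping.keys f)"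
proof -
  have ne: "Poly_Mapping.keys f \<noteq> {}" using assms by simp
  show "\<forall>k\<in>Poly_Mapping.keys f. weight n \<omega> k \<le> Max (weight n \<omega> ` Poly_Mapping.keys f)"
    by simp
  have "Max (weight n \<omega> ` Poly_Mapping.keys f) \<in> weight n \<omega> ` Poly_Mapping.keys f"
    by (rule Max_in) (use ne in auto)
  then show "\<exists>k\<in>Poly_Mapping.keys f. weight n \<omega> k = Max (weight n \<omega> ` Poly_Mapping.keys f)"
    by auto
qed

lemma part1:
  fixes W :: "'k::field mpoly set"
  assumes W: "ksubspace W" "W \<subseteq> Ad n d"
  shows "kdim (weight_component n \<omega> a (init_space n \<omega> W)) + kdim (Pw n \<omega> (a+1) ` W) = kdim (Pw n \<omega> a ` W)"
proof -
  interpret pa: module_hom sc sc "Pw n \<omega> a :: 'k mpoly \<Rightarrow> _" by (rule Pw_hom)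
  interpret pb: module_hom sc sc "Pw n \<omega> (a+1) :: 'k mpoly \<Rightarrow> _" by (rule Pw_hom)
  define Q :: "'k mpoly \<Rightarrow> 'k mpoly" where "Q = restr (\<lambda>m. weight n \<omega> m = a)"
  interpret q: module_hom sc sc Q unfolding Q_def by (rule restr_hom)
  define U where "U = Pw n \<omega> a ` W"
  define D where "D = U \<inter> {x. Pw n \<omega> (a+1) x = 0}"
  have Us: "ksubspace U" unfolding U_def by (rule pa.subspace_image[OF W(1)])
  have Ds: "ksubspace D" unfolding D_def by (intro kvs.subspace_inter Us pb.subspace_kernel)
  have UAd: "U \<subseteq> Ad n d" unfolding U_def using W(2) Pw_Ad by blast
  have "kdim U = kdim (Pw n \<omega> (a+1) ` U) + kdim D"
    unfolding D_def by (rule rank_nullity[OF Pw_hom Us finite_MB]) (use UAd Ad_span in auto)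
  moreover have "Pw n \<omega> (a+1) ` U = Pw n \<omega> (a+1) ` W"
    unfolding U_def image_image by (simp add: Pw_Pw)
  moreover have "weight_component n \<omega> a (init_space n \<omega> W) = D"
  proof
    let ?E = "kspan {monom m :: 'k mpoly | m. in_vars n m \<and> weight n \<omega> m = a}"
    have E: "?E = {f. \<forall>k\<in>Poly_Mapping.keys f. in_vars n k \<and> weight n \<omega> k = a}"
      by (rule span_monoms)
    show "D \<subseteq> weight_component n \<omega> a (init_space n \<omega> W)"
    proof
      fix x assume "x \<in> D"
      then obtain w where w: "w \<in> W" "x = Pw n \<omega> a w" "Pw n \<omega> (a+1) (Pw n \<omega> a w) = 0"
        unfolding D_def U_def by blast
      have wle: "\<forall>k\<in>Poly_Mapping.keys w. weight n \<omega> k \<le> a"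
        using w(3) by (simp add: Pw_Pw Pw_eq_0_iff)
      have wAd: "\<forall>k\<in>Poly_Mapping.keys w. in_vars n k"
        using w(1) W(2) unfolding Ad_def is_mon_def by blast
      have xE: "x \<in> ?E" unfolding E using w(2) wle wAd by (auto simp: keys_Pw)
      have "x \<in> init_space n \<omega> W"
      proof (cases "x = 0")
        case True then show ?thesis unfolding init_space_def by (simp add: kvs.span_zero)
      next
        case False
        then obtain k0 where k0: "k0 \<in> Poly_Mapping.keys x" by fastforce
        then have k0w: "k0 \<in> Poly_Mapping.keys w" "a \<le> weight n \<omega> k0" using w(2) by (auto simp: keys_Pw)
        have wne: "w \<noteq> 0" using k0w by auto
        define M where "M = Max (weight n \<omega> ` Poly_Mapping.keys w)"
        have "M = a"
        proof -
          have "M \<ge> weight n \<omega> k0" using Max_props(1)[OF wne] k0w M_def by auto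
          moreover obtain k1 where "k1 \<in> Poly_Mapping.keys w" "weight n \<omega> k1 = M"
            using Max_props(2)[OF wne] M_def by auto
          ultimately show ?thesis using wle k0w by force
        qed
        have "init_form n \<omega> w = x"
          unfolding init_form_eq[OF wne] M_def[symmetric] \<open>M = a\<close> w(2)
        proof (rule poly_mapping_eqI)
          fix k show "Poly_Mapping.lookup (restr (\<lambda>m. weight n \<omega> m = a) w) k = Poly_Mapping.lookup (Pw n \<omega> a w) k"
            using wle[rule_format, of k] by (cases "k \<in> Poly_Mapping.keys w") (auto simp: in_keys_iff)
        qed
        then show ?thesis unfolding init_space_def using w(1) by (auto intro: kvs.span_base)
      qed
      then show "x \<in> weight_component n \<omega> a (init_space n \<omega> W)"
        unfolding weight_component_def using xE by blast
    qed
  next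
    show "weight_component n \<omega> a (init_space n \<omega> W) \<subseteq> D"
    proof
      fix x assume x: "x \<in> weight_component n \<omega> a (init_space n \<omega> W)"
      then have xE: "\<forall>k\<in>Poly_Mapping.keys x. weight n \<omega> k = a"
        unfolding weight_component_def span_monoms by auto
      have Qx: "Q x = x" unfolding Q_def by (rule restr_id) (use xE in auto)
      have QI: "Q (init_form n \<omega> w) \<in> D" if w: "w \<in> W" for w
      proof (cases "w = 0")
        case True
        then show ?thesis using Ds kvs.subspace_0 by (simp add: init_form_def)
      next
        case False
        define M where "M = Max (weight n \<omega> ` Poly_Mapping.keys w)"
        have QIw: "Q (init_form n \<omega> w) = restr (\<lambda>m. weight n \<omega> m = a \<and> weight n \<omega> m = M) w"
          unfolding Q_def init_form_eq[OF False] M_def restr_restr ..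
        show ?thesis
        proof (cases "M = a")
          case True
          have wle: "\<forall>k\<in>Poly_Mapping.keys w. weight n \<omega> k \<le> a"
            using Max_props(1)[OF False] M_def True by auto
          have "restr (\<lambda>m. weight n \<omega> m = a \<and> weight n \<omega> m = M) w = Pw n \<omega> a w"
          proof (rule poly_mapping_eqI)
            fix k show "Poly_Mapping.lookup (restr (\<lambda>m. weight n \<omega> m = a \<and> weight n \<omega> m = M) w) k = Poly_Mapping.lookup (Pw n \<omega> a w) k"
              using wle[rule_format, of k] True by (cases "k \<in> Poly_Mapping.keys w") (auto simp: in_keys_iff)
          qed
          moreover have "Pw n \<omega> (a+1) (Pw n \<omega> a w) = 0"
            using wle by (simp add: Pw_Pw Pw_eq_0_iff)
          ultimately show ?thesis unfolding QIw D_def U_def using w by auto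
        next
          case False
          have "restr (\<lambda>m. weight n \<omega> m = a \<and> weight n \<omega> m = M) w = 0"
            by (rule restr_zero) (use False in auto)
          then show ?thesis unfolding QIw using Ds kvs.subspace_0 by simp
        qed
      qed
      have "x \<in> init_space n \<omega> W" using x unfolding weight_component_def by blast
      then have "Q x \<in> Q ` kspan (init_form n \<omega> ` W)" unfolding init_space_def by blast
      also have "\<dots> = kspan (Q ` init_form n \<omega> ` W)" by (rule q.span_image[symmetric])
      also have "\<dots> \<subseteq> D" by (rule kvs.span_minimal) (use QI Ds in auto)
      finally show "x \<in> D" using Qx by simp
    qed
  qed
  ultimately show ?thesis unfolding U_def by simp
qed



definition Lf :: "nat \<Rightarrow> (nat \<Rightarrow> nat \<Rightarrow> 'k::field) \<Rightarrow> nat \<Rightarrow> 'k mpoly" where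
  "Lf n b j = (\<Sum>i<n. sc (b i j) (Var i))"

definition phi :: "nat \<Rightarrow> (nat \<Rightarrow> nat \<Rightarrow> 'k::field) \<Rightarrow> (nat \<Rightarrow>\<^sub>0 nat) \<Rightarrow> 'k mpoly" where
  "phi n b m = (\<Prod>j<n. Lf n b j ^ Poly_Mapping.lookup m j)"

lemma act_alt: "act n b f = (\<Sum>m\<in>Poly_Mapping.keys f. sc (Poly_Mapping.lookup f m) (phi n b m))"
  unfolding act_def phi_def Lf_def ..

lemma act_superset:
  assumes "finite S" "Poly_Mapping.keys f \<subseteq> S"
  shows "act n b f = (\<Sum>m\<in>S. sc (Poly_Mapping.lookup f m) (phi n b m))"
  unfolding act_alt
  by (rule sum.mono_neutral_left) (use assms in \<open>auto simp: in_keys_iff\<close>)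

lemma sc_sum: "sc c (sum g A) = (\<Sum>x\<in>A. sc c (g x))"
  by (simp add: sc_conv sum_distrib_left)

lemma act_add: "act n b (f + g) = act n b f + act n b g"
proof -
  let ?S = "Poly_Mapping.keys f \<union> Poly_Mapping.keys g"
  have "act n b (f + g) = (\<Sum>m\<in>?S. sc (Poly_Mapping.lookup (f + g) m) (phi n b m))"
    by (rule act_superset) (use keys_add[of f g] in auto)
  also have "\<dots> = (\<Sum>m\<in>?S. sc (Poly_Mapping.lookup f m) (phi n b m)) + (\<Sum>m\<in>?S. sc (Poly_Mapping.lookup g m) (phi n b m))"
    by (simp add: lookup_add kvs.scale_left_distrib sum.distrib)
  also have "\<dots> = act n b f + act n b g"
    by (subst (1 2) act_superset[of ?S]) auto
  finally show ?thesis .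
qed

lemma act_sc: "act n b (sc c f) = sc c (act n b f)"
proof -
  have "act n b (sc c f) = (\<Sum>m\<in>Poly_Mapping.keys f. sc (Poly_Mapping.lookup (sc c f) m) (phi n b m))"
    by (rule act_superset) (use keys_sc in auto)
  also have "\<dots> = sc c (act n b f)"
    unfolding act_alt sc_sum by (simp add: kvs.scale_scale)
  finally show ?thesis .
qed

lemma act_hom: "module_hom sc sc (act n b :: 'k::field mpoly \<Rightarrow> _)"
  by (rule module_homI) (simp_all add: act_add act_sc)

lemma act_sc_monom: "act n b (sc c (monom m)) = sc c (phi n b m)"
proof -
  have "act n b (sc c (monom m)) = (\<Sum>m'\<in>{m}. sc (Poly_Mapping.lookup (sc c (monom m)) m') (phi n b m'))"
    by (rule act_superset) (use keys_sc[of c "monom m"] in auto)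
  then show ?thesis by (simp add: lookup_monom)
qed

lemma phi_add: "phi n b (m + m') = phi n b m * phi n b m'"
  unfolding phi_def by (simp add: lookup_add power_add prod.distrib)

lemma phi_zero: "phi n b 0 = 1"
  unfolding phi_def by simp

lemma monom_mult: "monom m * monom m' = (monom (m + m') :: 'k::field mpoly)"
  unfolding monom_def by (simp add: mult_single)

lemma sc_mult_sc: "sc c p * sc c' q = sc (c * c') (p * q)"
  by (simp add: sc_conv mult_single algebra_simps)

lemma act_mult:
  fixes f g :: "'k::field mpoly"
  shows "act n b (f * g) = act n b f * act n b g"
proof -
  interpret ah: module_hom sc sc "act n b :: 'k::field mpoly \<Rightarrow> _" by (rule act_hom)
  let ?F = "Poly_Mapping.keys f" and ?G = "Poly_Mapping.keys g"
  have "f * g = (\<Sum>m\<in>?F. sc (Poly_Mapping.lookup f m) (monom m)) * (\<Sum>m\<in>?G. sc (Poly_Mapping.lookup g m) (monom m))"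
    using sum_singles[of f] sum_singles[of g] by simp
  also have "\<dots> = (\<Sum>m\<in>?F. \<Sum>m'\<in>?G. sc (Poly_Mapping.lookup f m * Poly_Mapping.lookup g m') (monom (m + m')))"
    by (simp add: sum_product sc_mult_sc monom_mult)
  finally have fg: "f * g = \<dots>" .
  have "act n b (f * g) = (\<Sum>m\<in>?F. \<Sum>m'\<in>?G. sc (Poly_Mapping.lookup f m * Poly_Mapping.lookup g m') (phi n b (m + m')))"
    unfolding fg ah.sum act_sc_monom ..
  also have "\<dots> = (\<Sum>m\<in>?F. sc (Poly_Mapping.lookup f m) (phi n b m)) * (\<Sum>m\<in>?G. sc (Poly_Mapping.lookup g m) (phi n b m))"
    by (simp add: sum_product sc_mult_sc phi_add)
  also have "\<dots> = act n b f * act n b g" unfolding act_alt ..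
  finally show ?thesis .
qed

lemma act_one: "act n b 1 = 1"
proof -
  have "(1 :: 'a::field mpoly) = sc 1 (monom 0)" unfolding monom_def by simp
  then show ?thesis using act_sc_monom[of n b 1 0] by (simp add: phi_zero)
qed

lemma act_power: "act n b (p ^ e) = act n b p ^ e"
  by (induction e) (simp_all add: act_one act_mult)

lemma act_prod: "act n b (\<Prod>j\<in>J. g j) = (\<Prod>j\<in>J. act n b (g j))"
  by (induction J rule: infinite_finite_induct) (simp_all add: act_one act_mult)

lemma act_Var:
  assumes "i < n"
  shows "act n c (Var i) = Lf n c i"
proof -
  have "act n c (Var i) = act n c (sc 1 (monom (Poly_Mapping.single i 1)))" unfolding Var_def by simp
  also have "\<dots> = phi n c (Poly_Mapping.single i 1)" using act_sc_monom[of n c 1 "Poly_Mapping.single i 1"] by simp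
  also have "\<dots> = (\<Prod>j<n. if j = i then Lf n c j else 1)"
    unfolding phi_def by (rule prod.cong) (auto simp: lookup_single)
  also have "\<dots> = Lf n c i" using assms by (simp add: prod.delta)
  finally show ?thesis .
qed



lemma Var_power: "Var j ^ e = (monom (Poly_Mapping.single j e) :: 'k::field mpoly)"
proof (induction e)
  case 0 then show ?case unfolding monom_def by simp
next
  case (Suc e)
  have "Var j ^ Suc e = monom (Poly_Mapping.single j e) * (Var j :: 'k mpoly)"
    using Suc by (simp add: mult.commute)
  also have "\<dots> = monom (Poly_Mapping.single j (Suc e))"
    unfolding Var_def monom_mult by (simp flip: single_add)
  finally show ?case .
qed

lemma monom_prod: "(\<Prod>j\<in>J. monom (g j)) = (monom (\<Sum>j\<in>J. g j) :: 'k::field mpoly)"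
  by (induction J rule: infinite_finite_induct) (simp_all add: monom_mult, simp_all add: monom_def)

lemma sum_single_lookup:
  fixes m :: "nat \<Rightarrow>\<^sub>0 nat"
  assumes "Poly_Mapping.keys m \<subseteq> {..<n}"
  shows "(\<Sum>j<n. Poly_Mapping.single j (Poly_Mapping.lookup m j)) = m"
proof (rule poly_mapping_eqI)
  fix k
  have "Poly_Mapping.lookup (\<Sum>j<n. Poly_Mapping.single j (Poly_Mapping.lookup m j)) k
      = (\<Sum>j<n. if j = k then Poly_Mapping.lookup m k else 0)"
    by (simp add: lookup_sum lookup_single when_def)
  also have "\<dots> = Poly_Mapping.lookup m k"
  proof (cases "k < n")
    case True then show ?thesis by (subst sum.delta) auto
  next
    case False then have "k \<notin> Poly_Mapping.keys m" using assms by auto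
    then show ?thesis using False by (simp add: in_keys_iff sum.delta)
  qed
  finally show "Poly_Mapping.lookup (\<Sum>j<n. Poly_Mapping.single j (Poly_Mapping.lookup m j)) k = Poly_Mapping.lookup m k" .
qed

lemma prod_Var_monom:
  assumes "in_vars n m"
  shows "(\<Prod>j<n. Var j ^ Poly_Mapping.lookup m j) = (monom m :: 'k::field mpoly)"
  using assms unfolding in_vars_def by (simp add: Var_power monom_prod sum_single_lookup)

lemma act_Lf:
  assumes inv: "\<forall>i<n. \<forall>j<n. (\<Sum>k<n. c i k * b k j) = (if i = j then 1 else 0)" and j: "j < n"
  shows "act n c (Lf n b j) = (Var j :: 'k::field mpoly)"
proof -
  interpret ah: module_hom sc sc "act n c :: 'k::field mpoly \<Rightarrow> _" by (rule act_hom)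
  have "act n c (Lf n b j) = (\<Sum>i<n. sc (b i j) (\<Sum>k<n. sc (c k i) (Var k)))"
    unfolding Lf_def ah.sum ah.scale by (simp add: act_Var Lf_def)
  also have "\<dots> = (\<Sum>i<n. \<Sum>k<n. sc (c k i * b i j) (Var k))"
    by (simp only: kvs.scale_sum_right kvs.scale_scale mult.commute)
  also have "\<dots> = (\<Sum>k<n. \<Sum>i<n. sc (c k i * b i j) (Var k))"
    by (rule sum.swap)
  also have "\<dots> = (\<Sum>k<n. sc (\<Sum>i<n. c k i * b i j) (Var k))"
    by (simp only: kvs.scale_sum_left)
  also have "\<dots> = (\<Sum>k<n. if k = j then Var j else 0)"
    by (rule sum.cong) (use inv j in auto)
  also have "\<dots> = Var j" using j by simp
  finally show ?thesis .
qed

lemma act_inverse: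
  assumes inv: "\<forall>i<n. \<forall>j<n. (\<Sum>k<n. c i k * b k j) = (if i = j then 1 else 0)"
    and f: "\<forall>m\<in>Poly_Mapping.keys f. in_vars n m"
  shows "act n c (act n b f) = (f :: 'k::field mpoly)"
proof -
  interpret ah: module_hom sc sc "act n c :: 'k::field mpoly \<Rightarrow> _" by (rule act_hom)
  have "act n c (act n b f) = (\<Sum>m\<in>Poly_Mapping.keys f. sc (Poly_Mapping.lookup f m) (act n c (phi n b m)))"
    unfolding act_alt[of n b] ah.sum ah.scale ..
  also have "\<dots> = (\<Sum>m\<in>Poly_Mapping.keys f. sc (Poly_Mapping.lookup f m) (monom m))"
  proof (rule sum.cong[OF refl])
    fix m assume m: "m \<in> Poly_Mapping.keys f"
    have "act n c (phi n b m) = (\<Prod>j<n. Var j ^ Poly_Mapping.lookup m j)"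
      unfolding phi_def act_prod act_power by (rule prod.cong) (use act_Lf[OF inv] in auto)
    also have "\<dots> = monom m" using f m prod_Var_monom by blast
    finally show "sc (Poly_Mapping.lookup f m) (act n c (phi n b m)) = sc (Poly_Mapping.lookup f m) (monom m)" by simp
  qed
  also have "\<dots> = f" by (rule sum_singles[symmetric])
  finally show ?thesis .
qed



lemma keys_subspace: "ksubspace {f :: 'k::field mpoly. \<forall>k\<in>Poly_Mapping.keys f. R k}"
  unfolding span_monoms[symmetric] by simp

lemma is_mon_add: "is_mon n d1 a \<Longrightarrow> is_mon n d2 b \<Longrightarrow> is_mon n (d1 + d2) (a + b)"
  unfolding is_mon_def in_vars_def using keys_add[of a b] by (auto simp: lookup_add sum.distrib)

lemma Ad_mult:
  assumes "p \<in> Ad n d1" "q \<in> Ad n d2"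
  shows "p * q \<in> Ad n (d1 + d2)"
  unfolding Ad_def
proof (rule CollectI, rule ballI)
  fix k assume "k \<in> Poly_Mapping.keys (p * q)"
  then obtain a b where "k = a + b" "a \<in> Poly_Mapping.keys p" "b \<in> Poly_Mapping.keys q"
    using keys_mult by blast
  then show "is_mon n (d1 + d2) k" using assms is_mon_add unfolding Ad_def by blast
qed

lemma one_Ad: "(1 :: 'k::field mpoly) \<in> Ad n 0"
  unfolding Ad_def is_mon_def in_vars_def by simp

lemma Var_Ad: "i < n \<Longrightarrow> (Var i :: 'k::field mpoly) \<in> Ad n 1"
  unfolding Ad_def is_mon_def in_vars_def Var_def monom_def
  by (simp add: lookup_single when_def)

lemma Lf_Ad: "(Lf n b j :: 'k::field mpoly) \<in> Ad n 1"
  unfolding Lf_def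
  by (intro kvs.subspace_sum[OF Ad_subspace] kvs.subspace_scale[OF Ad_subspace] Var_Ad) simp

lemma power_Ad: "(p :: 'k::field mpoly) \<in> Ad n 1 \<Longrightarrow> p ^ e \<in> Ad n e"
  by (induction e) (auto simp: one_Ad dest: Ad_mult)

lemma prod_Ad: "finite J \<Longrightarrow> (\<And>j. j \<in> J \<Longrightarrow> (g j :: 'k::field mpoly) \<in> Ad n (e j)) \<Longrightarrow> (\<Prod>j\<in>J. g j) \<in> Ad n (\<Sum>j\<in>J. e j)"
  by (induction J rule: finite_induct) (auto simp: one_Ad intro: Ad_mult)

lemma phi_Ad:
  assumes "is_mon n d m"
  shows "(phi n b m :: 'k::field mpoly) \<in> Ad n d"
proof -
  have "(\<Prod>j\<in>{..<n}. Lf n b j ^ Poly_Mapping.lookup m j :: 'k mpoly) \<in> Ad n (\<Sum>j\<in>{..<n}. Poly_Mapping.lookup m j)"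
    by (rule prod_Ad) (auto intro!: power_Ad Lf_Ad)
  then show ?thesis using assms unfolding phi_def is_mon_def by simp
qed

lemma act_Ad: "(f :: 'k::field mpoly) \<in> Ad n d \<Longrightarrow> act n b f \<in> Ad n d"
  unfolding act_alt
  by (intro kvs.subspace_sum[OF Ad_subspace] kvs.subspace_scale[OF Ad_subspace] phi_Ad) (auto simp: Ad_def)

definition Gw :: "nat \<Rightarrow> (nat \<Rightarrow> int) \<Rightarrow> int \<Rightarrow> 'k::field mpoly set" where
  "Gw n \<omega> a = {f. \<forall>k\<in>Poly_Mapping.keys f. a \<le> weight n \<omega> k}"

lemma Gw_subspace: "ksubspace (Gw n \<omega> a)"
  unfolding Gw_def by (rule keys_subspace)

lemma Gw_mono: "a' \<le> a \<Longrightarrow> Gw n \<omega> a \<subseteq> Gw n \<omega> a'"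
  unfolding Gw_def by auto

lemma weight_add: "weight n \<omega> (m + m') = weight n \<omega> m + weight n \<omega> m'"
  unfolding weight_def by (simp add: lookup_add sum.distrib algebra_simps)

lemma weight_zero: "weight n \<omega> 0 = 0"
  unfolding weight_def by simp

lemma Gw_mult:
  assumes "p \<in> Gw n \<omega> a1" "q \<in> Gw n \<omega> a2"
  shows "p * q \<in> Gw n \<omega> (a1 + a2)"
  unfolding Gw_def
proof (rule CollectI, rule ballI)
  fix k assume "k \<in> Poly_Mapping.keys (p * q)"
  then obtain a b where "k = a + b" "a \<in> Poly_Mapping.keys p" "b \<in> Poly_Mapping.keys q"
    using keys_mult by blast
  then show "a1 + a2 \<le> weight n \<omega> k" using assms unfolding Gw_def by (auto simp: weight_add intro: add_mono)
qed

lemma one_Gw: "(1 :: 'k::field mpoly) \<in> Gw n \<omega> 0"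
  unfolding Gw_def by (simp add: weight_zero)

lemma weight_single: "i < n \<Longrightarrow> weight n \<omega> (Poly_Mapping.single i 1) = \<omega> i"
proof -
  assume i: "i < n"
  have "weight n \<omega> (Poly_Mapping.single i 1) = (\<Sum>j<n. if j = i then \<omega> i else 0)"
    unfolding weight_def by (rule sum.cong) (auto simp: lookup_single)
  also have "\<dots> = \<omega> i" using i by (subst sum.delta) auto
  finally show ?thesis .
qed

lemma Var_Gw:
  assumes "i < n" shows "(Var i :: 'k::field mpoly) \<in> Gw n \<omega> (\<omega> i)"
proof -
  have "weight n \<omega> (Poly_Mapping.single i 1) = \<omega> i" using assms by (rule weight_single)
  then show ?thesis unfolding Gw_def Var_def monom_def by simp
qed

lemma omega_mono:
  assumes "\<forall>i. Suc i < n \<longrightarrow> \<omega> (Suc i) \<le> \<omega> i" "i \<le> j" "j < n"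
  shows "\<omega> j \<le> (\<omega> i :: int)"
  using assms(2,3)
proof (induction j)
  case 0 then show ?case by simp
next
  case (Suc j)
  show ?case
  proof (cases "i = Suc j")
    case True then show ?thesis by simp
  next
    case False
    then have "\<omega> j \<le> \<omega> i" using Suc by simp
    moreover have "\<omega> (Suc j) \<le> \<omega> j" using assms(1) Suc.prems by simp
    ultimately show ?thesis by simp
  qed
qed

lemma Lf_Gw:
  assumes tri: "\<forall>i<n. \<forall>j<n. j < i \<longrightarrow> b i j = 0" and om: "\<forall>i. Suc i < n \<longrightarrow> \<omega> (Suc i) \<le> \<omega> i"
    and j: "j < n"
  shows "(Lf n b j :: 'k::field mpoly) \<in> Gw n \<omega> (\<omega> j)"
  unfolding Lf_def
proof (intro kvs.subspace_sum[OF Gw_subspace])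
  fix i assume i: "i \<in> {..<n}"
  show "sc (b i j) (Var i) \<in> Gw n \<omega> (\<omega> j)"
  proof (cases "j < i")
    case True then have "b i j = 0" using tri i j by auto
    then show ?thesis using kvs.subspace_0[OF Gw_subspace] by simp
  next
    case False
    then have "\<omega> j \<le> \<omega> i" using omega_mono[OF om _ j, of i] by simp
    then have "Var i \<in> Gw n \<omega> (\<omega> j)" using Var_Gw[of i n \<omega>] i Gw_mono by blast
    then show ?thesis by (rule kvs.subspace_scale[OF Gw_subspace])
  qed
qed

lemma power_Gw: "(p :: 'k::field mpoly) \<in> Gw n \<omega> a \<Longrightarrow> p ^ e \<in> Gw n \<omega> (a * int e)"
proof (induction e)
  case 0 then show ?case by (simp add: one_Gw)
next
  case (Suc e)
  then have "p * p ^ e \<in> Gw n \<omega> (a + a * int e)" by (intro Gw_mult)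
  then show ?case by (simp add: algebra_simps)
qed

lemma prod_Gw: "finite J \<Longrightarrow> (\<And>j. j \<in> J \<Longrightarrow> (g j :: 'k::field mpoly) \<in> Gw n \<omega> (e j)) \<Longrightarrow> (\<Prod>j\<in>J. g j) \<in> Gw n \<omega> (\<Sum>j\<in>J. e j)"
  by (induction J rule: finite_induct) (auto simp: one_Gw intro: Gw_mult)

lemma phi_Gw:
  assumes tri: "\<forall>i<n. \<forall>j<n. j < i \<longrightarrow> b i j = 0" and om: "\<forall>i. Suc i < n \<longrightarrow> \<omega> (Suc i) \<le> \<omega> i"
  shows "(phi n b m :: 'k::field mpoly) \<in> Gw n \<omega> (weight n \<omega> m)"
  unfolding phi_def weight_def
  by (rule prod_Gw) (auto intro: power_Gw Lf_Gw[OF tri om])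

lemma act_Gw:
  assumes tri: "\<forall>i<n. \<forall>j<n. j < i \<longrightarrow> b i j = 0" and om: "\<forall>i. Suc i < n \<longrightarrow> \<omega> (Suc i) \<le> \<omega> i"
    and f: "(f :: 'k::field mpoly) \<in> Gw n \<omega> a"
  shows "act n b f \<in> Gw n \<omega> a"
  unfolding act_alt
proof (intro kvs.subspace_sum[OF Gw_subspace] kvs.subspace_scale[OF Gw_subspace])
  fix m assume "m \<in> Poly_Mapping.keys f"
  then have "a \<le> weight n \<omega> m" using f unfolding Gw_def by auto
  then show "phi n b m \<in> Gw n \<omega> a" using phi_Gw[OF tri om] Gw_mono by blast
qed



lemma Pw_homog:
  assumes "\<forall>m1\<in>Poly_Mapping.keys g. \<forall>m2\<in>Poly_Mapping.keys g. weight n \<omega> m1 = weight n \<omega> m2"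
  shows "Pw n \<omega> a g = g \<or> Pw n \<omega> a g = (0 :: 'k::field mpoly)"
proof (cases "g = 0")
  case True then show ?thesis by (simp add: Pw_eq_0_iff)
next
  case False
  then obtain k0 where k0: "k0 \<in> Poly_Mapping.keys g" by fastforce
  show ?thesis
  proof (cases "a \<le> weight n \<omega> k0")
    case True
    have "Pw n \<omega> a g = g" unfolding Pw_def
    proof (rule restr_id)
      fix k assume "k \<in> Poly_Mapping.keys g"
      then have "weight n \<omega> k = weight n \<omega> k0" using assms k0 by blast
      then show "a \<le> weight n \<omega> k" using True by simp
    qed
    then show ?thesis by simp
  next
    case False
    have "Pw n \<omega> a g = 0" unfolding Pw_eq_0_iff
    proof
      fix k assume "k \<in> Poly_Mapping.keys g"
      then have "weight n \<omega> k = weight n \<omega> k0" using assms k0 by blast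
      then show "weight n \<omega> k < a" using False by simp
    qed
    then show ?thesis by simp
  qed
qed

lemma act_zero: "act n c 0 = 0"
  by (simp add: act_alt)

lemma dim_zero_space: "kdim {0 :: 'k::field mpoly} = 0"
proof -
  have "kdim {0 :: 'k::field mpoly} = kdim (kspan ({} :: 'k mpoly set))" by simp
  also have "\<dots> = kdim ({} :: 'k mpoly set)" by (rule kvs.dim_span)
  also have "\<dots> = 0" using kvs.dim_eq_card_independent[OF kvs.independent_empty] by simp
  finally show ?thesis .
qed

lemma part2_step:
  fixes W :: "'k::field mpoly set"
  assumes W: "ksubspace W" "W \<subseteq> Ad n d" and hom: "omega_homogeneous n \<omega> W"
    and b: "upper_tri_invertible n b" and om: "\<forall>i. Suc i < n \<longrightarrow> \<omega> (Suc i) \<le> \<omega> i"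
  shows "kdim (Pw n \<omega> a ` W) \<le> kdim (Pw n \<omega> a ` act n b ` W)"
proof -
  interpret ah: module_hom sc sc "act n b :: 'k mpoly \<Rightarrow> _" by (rule act_hom)
  interpret ph: module_hom sc sc "Pw n \<omega> a :: 'k mpoly \<Rightarrow> _" by (rule Pw_hom)
  have tri: "\<forall>i<n. \<forall>j<n. j < i \<longrightarrow> b i j = 0" using b unfolding upper_tri_invertible_def by blast
  obtain c where inv: "\<forall>i<n. \<forall>j<n. (\<Sum>k<n. c i k * b k j) = (if i = j then 1 else 0)"
    using b unfolding upper_tri_invertible_def by blast
  obtain G0 where G0: "kspan G0 = W"
    "\<forall>g\<in>G0. \<forall>m1\<in>Poly_Mapping.keys g. \<forall>m2\<in>Poly_Mapping.keys g. weight n \<omega> m1 = weight n \<omega> m2"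
    using hom unfolding omega_homogeneous_def by blast
  define V where "V = W \<inter> Gw n \<omega> a"
  have Vs: "ksubspace V" unfolding V_def by (intro kvs.subspace_inter W(1) Gw_subspace)
  have PW: "Pw n \<omega> a ` W = V"
  proof
    have "Pw n \<omega> a ` G0 \<subseteq> W"
    proof
      fix y assume "y \<in> Pw n \<omega> a ` G0"
      then obtain g where g: "g \<in> G0" "y = Pw n \<omega> a g" by blast
      have "g \<in> W" using g(1) G0(1) kvs.span_base by blast
      then show "y \<in> W" using Pw_homog[OF bspec[OF G0(2) g(1)], of a] g(2) kvs.subspace_0[OF W(1)] by auto
    qed
    then have "kspan (Pw n \<omega> a ` G0) \<subseteq> W" by (rule kvs.span_minimal[OF _ W(1)])
    then have "Pw n \<omega> a ` W \<subseteq> W" unfolding G0(1)[symmetric] ph.span_image .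
    moreover have "Pw n \<omega> a ` W \<subseteq> Gw n \<omega> a" unfolding Gw_def by (auto simp: keys_Pw)
    ultimately show "Pw n \<omega> a ` W \<subseteq> V" unfolding V_def by blast
  next
    show "V \<subseteq> Pw n \<omega> a ` W"
    proof
      fix x assume x: "x \<in> V"
      have "Pw n \<omega> a x = x" unfolding Pw_def by (rule restr_id) (use x in \<open>auto simp: V_def Gw_def\<close>)
      moreover have "x \<in> W" using x unfolding V_def by blast
      ultimately show "x \<in> Pw n \<omega> a ` W" by (metis image_eqI)
    qed
  qed
  have VAd: "V \<subseteq> Ad n d" using W(2) V_def by blast
  have "kdim V = kdim (act n b ` V) + kdim (V \<inter> {x. act n b x = 0})"
    by (rule rank_nullity[OF act_hom Vs finite_MB]) (use VAd Ad_span in auto)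
  moreover have "V \<inter> {x. act n b x = 0} = {0}"
  proof
    show "V \<inter> {x. act n b x = 0} \<subseteq> {0}"
    proof
      fix x assume x: "x \<in> V \<inter> {x. act n b x = 0}"
      have iv: "\<forall>m\<in>Poly_Mapping.keys x. in_vars n m" using x VAd unfolding Ad_def is_mon_def by blast
      have "x = act n c (act n b x)" using act_inverse[OF inv iv] by simp
      also have "\<dots> = 0" using x by (simp add: act_zero)
      finally show "x \<in> {0}" by simp
    qed
  next
    show "{0} \<subseteq> V \<inter> {x. act n b x = 0}" using kvs.subspace_0[OF Vs] by simp
  qed
  ultimately have dV: "kdim V = kdim (act n b ` V)" by (simp add: dim_zero_space)
  have sub: "act n b ` V \<subseteq> Pw n \<omega> a ` act n b ` W"
  proof
    fix y assume "y \<in> act n b ` V"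
    then obtain x where x: "x \<in> V" "y = act n b x" by blast
    have "y \<in> Gw n \<omega> a" using act_Gw[OF tri om] x unfolding V_def by blast
    then have "Pw n \<omega> a y = y" unfolding Pw_def by (intro restr_id) (auto simp: Gw_def)
    moreover have "y \<in> act n b ` W" using x V_def by blast
    ultimately show "y \<in> Pw n \<omega> a ` act n b ` W" by (metis image_eqI)
  qed
  have "Pw n \<omega> a ` act n b ` W \<subseteq> Ad n d" using W(2) act_Ad Pw_Ad by blast
  then have "kdim (act n b ` V) \<le> kdim (Pw n \<omega> a ` act n b ` W)"
    by (intro dim_mono_fin[OF finite_MB _ sub]) (simp add: Ad_span)
  then show ?thesis using PW dV by simp
qed

theorem proposition3p1:
  fixes n d :: nat and \<omega> :: "nat \<Rightarrow> int" and W :: "'k::field mpoly set"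
  assumes "n \<ge> 1" and "d > 0"
    and "ksubspace W" and "W \<subseteq> Ad n d"
    and "\<forall>i. Suc i < n \<longrightarrow> \<omega> (Suc i) \<le> \<omega> i" and "\<omega> (n - 1) \<ge> 0"
  shows "(\<forall>a::int. 0 \<le> a \<and> a \<le> \<omega> 0 * int d \<longrightarrow>
            int (kdim (weight_component n \<omega> a (init_space n \<omega> W)))
              = int (rk (Sset n d \<omega> a) W) - int (rk (Sset n d \<omega> (a + 1)) W))
       \<and> (omega_homogeneous n \<omega> W \<longrightarrow>
            (\<forall>b. upper_tri_invertible n b \<longrightarrow>
               list_all2 (\<le>) (alpha n d \<omega> W) (alpha n d \<omega> (act n b ` W))))"
proof (intro conjI allI impI)
  fix a :: int
  have "kdim (weight_component n \<omega> a (init_space n \<omega> W)) + kdim (Pw n \<omega> (a+1) ` W) = kdim (Pw n \<omega> a ` W)"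
    by (rule part1[OF assms(3,4)])
  then show "int (kdim (weight_component n \<omega> a (init_space n \<omega> W)))
              = int (rk (Sset n d \<omega> a) W) - int (rk (Sset n d \<omega> (a + 1)) W)"
    using rk_char[OF assms(3,4), of \<omega> a] rk_char[OF assms(3,4), of \<omega> "a+1"] by simp
next
  fix b :: "nat \<Rightarrow> nat \<Rightarrow> 'k"
  assume hom: "omega_homogeneous n \<omega> W" and b: "upper_tri_invertible n b"
  interpret ah: module_hom sc sc "act n b :: 'k mpoly \<Rightarrow> _" by (rule act_hom)
  have bW: "ksubspace (act n b ` W)" by (rule ah.subspace_image[OF assms(3)])
  have bWAd: "act n b ` W \<subseteq> Ad n d" using assms(4) act_Ad by blast
  have "rk (Sset n d \<omega> t) W \<le> rk (Sset n d \<omega> t) (act n b ` W)" for t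
    unfolding rk_char[OF assms(3,4)] rk_char[OF bW bWAd]
    by (rule part2_step[OF assms(3,4) hom b assms(5)])
  then show "list_all2 (\<le>) (alpha n d \<omega> W) (alpha n d \<omega> (act n b ` W))"
    unfolding alpha_def by (simp add: list_all2_conv_all_nth)
qed


end
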